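(* Let $\psi : [0,\infty) \to [0,\infty)$ be a measurable function such that $0 < 1/c_d := \int_0^\infty u^d \psi(u)\,{\rm d}u < \infty$ for all integers $d \ge 1$, and assume $\psi$ does not have compact support. For each $d \ge 1$, let $X_d$ be a random vector in $\mathbb{R}^{d+1}$ with density $x \mapsto c_d\,\psi(\|x\|)$, and let $U_d = \|X_d\|$. Assume there is $u_\ddagger$ such that on $[u_\ddagger, \infty)$ the function $\Lambda(u) := -\log \psi(u)$ is differentiable and $L(u) := u \Lambda'(u)$ is increasing; that $M(u) := L(u)/\log u \to \infty$ as $u \to \infty$; and that for every $\varepsilon \in (0,1)$, $\limsup_{u\to\infty} M((1-\varepsilon)u)/M(u) \le 1$ and $\liminf_{u\to\infty} M((1+\varepsilon)u)/M(u) \ge 1$. Let $u_d := L^{-1}(d)$. Assume further that $L$ is differentiable, that $\nu_d := u_d L'(u_d) \to \infty$ as $d\to\infty$, and that there is a sequence $\omega_d \to \infty$ such that $$\big|L(u_d) - L((1-\varepsilon)u_d) - \varepsilon u_d L'(u_d)\big| \le |\varepsilon|\,\nu_d/\omega_d \quad \text{whenever } \varepsilon^2 \le \omega_d/\nu_d.$$ Then for any sequence $\varepsilon_d > 0$ with $\varepsilon_d \sqrt{\nu_d} \to \infty$, $$\P\big(1 - \varepsilon_d \le U_d/u_d \le 1 + \varepsilon_d\big) \to 1 \quad \text{as } d \to \infty.$$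
   Context: $L^{-1}$ denotes the inverse of the increasing function $L$ on $[u_\ddagger,\infty)$, so $L(u_d)=d$ for $d$ large. The condition "$\varepsilon_d \gg 1/\sqrt{\nu_d}$" in the paper means $\varepsilon_d\sqrt{\nu_d}\to\infty$. *)

theory Defs
  imports "HOL-Probability.Probability"
begin

text \<open>Euclidean norm on R^(d+1), with vectors represented as functions
  nat => real on the index set {..d} (i.e. {0..d}, d+1 coordinates).\<close>
definition enorm :: "nat \<Rightarrow> (nat \<Rightarrow> real) \<Rightarrow> real" where
  "enorm d x = sqrt (\<Sum>i\<le>d. (x i)\<^sup>2)"

abbreviation lebesgue_R :: "nat \<Rightarrow> (nat \<Rightarrow> real) measure" where
  "lebesgue_R d \<equiv> PiM {..d} (\<lambda>_. lborel)"

end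

theory Submission
  imports Defs
begin

lemma enorm_meas[measurable]: "enorm d \<in> borel_measurable (lebesgue_R d)"
  unfolding enorm_def by measurable

definition scl :: "nat \<Rightarrow> real \<Rightarrow> (nat\<Rightarrow>real) \<Rightarrow> (nat\<Rightarrow>real)" where
  "scl d t x = (\<lambda>i\<in>{..d}. t * x i)"

lemma scl_meas[measurable]: "scl d t \<in> lebesgue_R d \<rightarrow>\<^sub>M lebesgue_R d"
  unfolding scl_def by measurable

lemma lborel_scale: "t > 0 \<Longrightarrow> A \<in> sets borel \<Longrightarrow> emeasure lborel {y::real. t*y \<in> A} = ennreal (inverse t) * emeasure lborel A"
proof -
  assume t: "t > 0" and A: "A \<in> sets borel"
  have "emeasure lborel {y::real. t*y \<in> A} = emeasure (distr lborel borel ((*) t)) A"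
    using A by (subst emeasure_distr) (auto simp: vimage_def)
  also have "\<dots> = ennreal (inverse t) * emeasure lborel A"
    using t A by (simp add: lborel_distr_mult emeasure_density_const)
  finally show ?thesis .
qed

lemma scale_PiM:
  assumes t: "t > 0"
  shows "density (distr (lebesgue_R d) (lebesgue_R d) (scl d t)) (\<lambda>_. ennreal (t ^ Suc d)) = lebesgue_R d"
proof -
  interpret product_sigma_finite "\<lambda>_::nat. lborel::real measure"
    by (simp add: product_sigma_finite.intro lborel.sigma_finite_measure_axioms)
  show ?thesis
  proof (rule PiM_eqI)
    fix A :: "nat \<Rightarrow> real set" assume A: "\<And>i. i \<in> {..d} \<Longrightarrow> A i \<in> sets lborel"
    have "Pi\<^sub>E {..d} A \<in> sets (lebesgue_R d)" using A by auto
    have eqs: "scl d t -` Pi\<^sub>E {..d} A \<inter> space (lebesgue_R d) = Pi\<^sub>E {..d} (\<lambda>i. {y. t*y \<in> A i})"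
      by (auto simp: scl_def space_PiM PiE_iff)
    have "emeasure (density (distr (lebesgue_R d) (lebesgue_R d) (scl d t)) (\<lambda>_. ennreal (t ^ Suc d))) (Pi\<^sub>E {..d} A)
        = ennreal (t ^ Suc d) * emeasure (lebesgue_R d) (Pi\<^sub>E {..d} (\<lambda>i. {y. t*y \<in> A i}))"
      using \<open>Pi\<^sub>E {..d} A \<in> sets (lebesgue_R d)\<close>
      by (simp add: emeasure_density_const emeasure_distr eqs)
    also have "\<dots> = ennreal (t ^ Suc d) * (\<Prod>i\<in>{..d}. ennreal (inverse t) * emeasure lborel (A i))"
      using A t by (subst emeasure_PiM) (auto simp: lborel_scale)
    also have "\<dots> = ennreal (t ^ Suc d) * (ennreal (inverse t) ^ Suc d * (\<Prod>i\<in>{..d}. emeasure lborel (A i)))"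
      by (simp add: prod.distrib)
    also have "\<dots> = (\<Prod>i\<in>{..d}. emeasure lborel (A i))"
    proof -
      have r: "t ^ Suc d * inverse t ^ Suc d = 1"
        using t by (metis power_mult_distrib right_inverse power_one order_less_irrefl)
      have "ennreal (t ^ Suc d) * ennreal (inverse t) ^ Suc d = ennreal (t ^ Suc d * inverse t ^ Suc d)"
        using t by (simp add: ennreal_power ennreal_mult'')
      also have "\<dots> = 1" using r by simp
      finally show ?thesis by (simp add: mult.assoc[symmetric])
    qed
    finally show "emeasure (density (distr (lebesgue_R d) (lebesgue_R d) (scl d t)) (\<lambda>_. ennreal (t ^ Suc d))) (Pi\<^sub>E {..d} A) = (\<Prod>i\<in>{..d}. emeasure lborel (A i))" .
  qed auto
qed
lemma enorm_nonneg: "enorm d x \<ge> 0"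
  unfolding enorm_def by (simp add: sum_nonneg)

lemma enorm_scl: "t > 0 \<Longrightarrow> enorm d (scl d t x) = t * enorm d x"
proof -
  assume t: "t > 0"
  have "(\<Sum>i\<le>d. (scl d t x i)\<^sup>2) = t\<^sup>2 * (\<Sum>i\<le>d. (x i)\<^sup>2)"
    by (simp add: scl_def sum_distrib_left power_mult_distrib)
  then show ?thesis using t by (simp add: enorm_def real_sqrt_mult)
qed

definition ballR :: "nat \<Rightarrow> real \<Rightarrow> (nat \<Rightarrow> real) set" where
  "ballR d t = {x \<in> space (lebesgue_R d). enorm d x < t}"

lemma ballR_sets[measurable]: "ballR d t \<in> sets (lebesgue_R d)"
  unfolding ballR_def by measurable

lemma ballR_scale:
  assumes t: "t > 0"
  shows "emeasure (lebesgue_R d) (ballR d t) = ennreal (t ^ Suc d) * emeasure (lebesgue_R d) (ballR d 1)"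
proof -
  have "emeasure (lebesgue_R d) (ballR d t) =
      emeasure (density (distr (lebesgue_R d) (lebesgue_R d) (scl d t)) (\<lambda>_. ennreal (t ^ Suc d))) (ballR d t)"
    using scale_PiM[OF t, of d] by simp
  also have "\<dots> = ennreal (t ^ Suc d) * emeasure (lebesgue_R d) (scl d t -` ballR d t \<inter> space (lebesgue_R d))"
    by (simp add: emeasure_density_const emeasure_distr)
  also have "scl d t -` ballR d t \<inter> space (lebesgue_R d) = ballR d 1"
    using t by (auto simp: ballR_def enorm_scl) (auto simp: scl_def space_PiM PiE_iff)
  finally show ?thesis .
qed

lemma ballR_fin: "emeasure (lebesgue_R d) (ballR d 1) < \<infinity>"
proof -
  interpret product_sigma_finite "\<lambda>_::nat. lborel::real measure"
    by (simp add: product_sigma_finite.intro lborel.sigma_finite_measure_axioms)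
  have sub: "ballR d 1 \<subseteq> Pi\<^sub>E {..d} (\<lambda>_. {-1..1})"
  proof
    fix x assume x: "x \<in> ballR d 1"
    have "\<bar>x i\<bar> \<le> 1" if i: "i \<le> d" for i
    proof -
      have "(x i)\<^sup>2 \<le> (\<Sum>j\<le>d. (x j)\<^sup>2)"
        using i by (intro member_le_sum) auto
      then have "\<bar>x i\<bar> \<le> enorm d x"
        unfolding enorm_def using real_sqrt_le_mono by fastforce
      then show ?thesis using x by (auto simp: ballR_def)
    qed
    then show "x \<in> Pi\<^sub>E {..d} (\<lambda>_. {-1..1})"
      using x by (auto simp: ballR_def space_PiM PiE_iff abs_le_iff)
  qed
  have "emeasure (lebesgue_R d) (ballR d 1) \<le> emeasure (lebesgue_R d) (Pi\<^sub>E {..d} (\<lambda>_. {-1..1}))"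
    by (rule emeasure_mono[OF sub]) auto
  also have "\<dots> = (\<Prod>i\<in>{..d}. emeasure lborel {-1..(1::real)})"
    by (subst emeasure_PiM) auto
  also have "\<dots> < \<infinity>" by (simp add: ennreal_mult_less_top power_less_top_ennreal)
  finally show ?thesis .
qed
definition vR :: "nat \<Rightarrow> real" where "vR d = enn2real (emeasure (lebesgue_R d) (ballR d 1))"

lemma vR: "emeasure (lebesgue_R d) (ballR d 1) = ennreal (vR d)" "vR d \<ge> 0"
  using ballR_fin[of d] by (auto simp: vR_def less_top)

lemma emeasure_ballR: "emeasure (lebesgue_R d) (ballR d t) = ennreal (vR d * t ^ Suc d) * indicator {0<..} t"
proof (cases "t > 0")
  case True
  then show ?thesis using ballR_scale[OF True, of d] vR
    by (simp add: ennreal_mult'' mult.commute)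
next
  case False
  then have "ballR d t = {}" by (auto simp: ballR_def) (smt (verit) enorm_nonneg)
  then show ?thesis using False by simp
qed

lemma distr_enorm:
  "distr (lebesgue_R d) borel (enorm d) =
     density lborel (\<lambda>r. ennreal (real (Suc d) * vR d * r ^ d) * indicator {0..} r)"
  (is "?N = ?D")
proof (rule measure_eqI_generator_eq[where E="range lessThan" and \<Omega>=UNIV and A="\<lambda>i. {..<real i}"])
  show "Int_stable (range lessThan :: real set set)"
    by (auto simp: Int_stable_def) (metis greaterThan_Int_greaterThan rangeI)
  show "range lessThan \<subseteq> Pow (UNIV :: real set)" by auto
  have sb: "sets (borel :: real measure) = sigma_sets UNIV (range lessThan)"
    by (subst borel_Iio) (simp add: sets_measure_of)
  show "sets ?N = sigma_sets UNIV (range lessThan)" using sb by simp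
  show "sets ?D = sigma_sets UNIV (range lessThan)" using sb by simp
  show "range (\<lambda>i. {..<real i}) \<subseteq> range lessThan" by auto
  show "(\<Union>i. {..<real i}) = UNIV"
    by (auto intro: reals_Archimedean2)
  have N: "emeasure ?N {..<t} = ennreal (vR d * t ^ Suc d) * indicator {0<..} t" for t
  proof -
    have "emeasure ?N {..<t} = emeasure (lebesgue_R d) (ballR d t)"
    proof -
      have "enorm d -` {..<t} \<inter> space (lebesgue_R d) = ballR d t" by (auto simp: ballR_def)
      then show ?thesis by (subst emeasure_distr) auto
    qed
    then show ?thesis by (simp add: emeasure_ballR)
  qed
  show "emeasure ?N {..<real i} \<noteq> \<infinity>" for i
    using N[of "real i"] by (simp split: split_indicator)
  fix X assume "X \<in> range (lessThan :: real \<Rightarrow> real set)"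
  then obtain t where X: "X = {..<t}" by auto
  have D: "emeasure ?D {..<t} = ennreal (vR d * t ^ Suc d) * indicator {0<..} t"
  proof (cases "t > 0")
    case True
    have "emeasure ?D {..<t} = (\<integral>\<^sup>+r. ennreal (real (Suc d) * vR d * r ^ d) * indicator {0..} r * indicator {..<t} r \<partial>lborel)"
      by (subst emeasure_density) auto
    also have "\<dots> = (\<integral>\<^sup>+r. ennreal (real (Suc d) * vR d * r ^ d) * indicator {0..t} r \<partial>lborel)"
      by (rule nn_integral_cong_AE) (use AE_lborel_singleton[of t] in \<open>auto split: split_indicator\<close>)
    also have "\<dots> = ennreal (vR d * t ^ Suc d - vR d * 0 ^ Suc d)"
      using True vR(2)
    proof (intro nn_integral_FTC_Icc[where F="\<lambda>r. vR d * r ^ Suc d"])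
      fix r :: real
      have "((\<lambda>r. vR d * r ^ Suc d) has_real_derivative vR d * (real (Suc d) * r ^ (Suc d - Suc 0))) (at r)"
        by (intro DERIV_cmult DERIV_pow)
      then show "((\<lambda>r. vR d * r ^ Suc d) has_real_derivative real (Suc d) * vR d * r ^ d) (at r)"
        by (simp add: ac_simps)
    qed (use True vR(2) in auto)
    finally show ?thesis using True by simp
  next
    case False
    have "emeasure ?D {..<t} = (\<integral>\<^sup>+r. ennreal (real (Suc d) * vR d * r ^ d) * indicator {0..} r * indicator {..<t} r \<partial>lborel)"
      by (subst emeasure_density) auto
    also have "\<dots> = (\<integral>\<^sup>+(r::real). 0 \<partial>lborel)"
      by (rule nn_integral_cong) (use False in \<open>auto split: split_indicator\<close>)
    finally show ?thesis using False by simp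
  qed
  show "emeasure ?N X = emeasure ?D X" using N D X by simp
qed

lemma polar:
  assumes [measurable]: "g \<in> borel_measurable borel"
  shows "(\<integral>\<^sup>+x. g (enorm d x) \<partial>lebesgue_R d) =
     (\<integral>\<^sup>+r. ennreal (real (Suc d) * vR d * r ^ d) * indicator {0..} r * g r \<partial>lborel)"
proof -
  have "(\<integral>\<^sup>+x. g (enorm d x) \<partial>lebesgue_R d) = (\<integral>\<^sup>+r. g r \<partial>distr (lebesgue_R d) borel (enorm d))"
    by (simp add: nn_integral_distr)
  also have "\<dots> = (\<integral>\<^sup>+r. ennreal (real (Suc d) * vR d * r ^ d) * indicator {0..} r * g r \<partial>lborel)"
    unfolding distr_enorm by (subst nn_integral_density) auto
  finally show ?thesis .
qed


lemma deriv_at: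
  assumes "\<forall>t\<ge>ud. ((\<lambda>s. - ln (\<psi> s)) has_real_derivative \<Lambda>' t) (at t within {ud..})"
    and "t > ud"
  shows "((\<lambda>s. - ln (\<psi> s)) has_real_derivative \<Lambda>' t) (at t)"
proof -
  have "t \<in> interior {ud..}" using assms(2) by simp
  then have "at t within {ud..} = at t" by (rule at_within_interior)
  with assms show ?thesis by (metis less_imp_le)
qed

lemma G_mono:
  fixes \<psi> \<Lambda>' :: "real \<Rightarrow> real"
  assumes deriv: "\<And>t. t > ud \<Longrightarrow> ((\<lambda>s. - ln (\<psi> s)) has_real_derivative \<Lambda>' t) (at t)"
    and xy: "ud < x" "0 < x" "x \<le> y"
    and cond: "\<And>r. x \<le> r \<Longrightarrow> r \<le> y \<Longrightarrow> r * \<Lambda>' r + k \<le> D"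
  shows "D * ln x + ln (\<psi> x) - k * ln x \<le> D * ln y + ln (\<psi> y) - k * ln y"
proof -
  have "(\<lambda>r. D * ln r - (- ln (\<psi> r)) - k * ln r) x \<le> (\<lambda>r. D * ln r - (- ln (\<psi> r)) - k * ln r) y"
  proof (rule DERIV_nonneg_imp_nondecreasing[OF xy(3)])
    fix r assume r: "x \<le> r" "r \<le> y"
    then have r0: "r > 0" "r > ud" using xy by auto
    have "((\<lambda>r. D * ln r - (- ln (\<psi> r)) - k * ln r) has_real_derivative (D * (1/r) - \<Lambda>' r - k * (1/r))) (at r)"
    proof -
      have d1: "((\<lambda>r. D * ln r) has_real_derivative D * (1/r)) (at r)"
        using r0 by (auto intro!: derivative_eq_intros)
      have d3: "((\<lambda>r. k * ln r) has_real_derivative k * (1/r)) (at r)"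
        using r0 by (auto intro!: derivative_eq_intros)
      show ?thesis using DERIV_diff[OF DERIV_diff[OF d1 deriv[OF r0(2)]] d3] by simp
    qed
    moreover have "D * (1/r) - \<Lambda>' r - k * (1/r) = (D - r * \<Lambda>' r - k) / r"
      using r0 by (simp add: field_simps)
    moreover have "(D - r * \<Lambda>' r - k) / r \<ge> 0"
      using cond[OF r] r0 by simp
    ultimately show "\<exists>y. ((\<lambda>r. D * ln r - (- ln (\<psi> r)) - k * ln r) has_real_derivative y) (at r) \<and> 0 \<le> y"
      by metis
  qed
  then show ?thesis by simp
qed

lemma G_anti:
  fixes \<psi> \<Lambda>' :: "real \<Rightarrow> real"
  assumes deriv: "\<And>t. t > ud \<Longrightarrow> ((\<lambda>s. - ln (\<psi> s)) has_real_derivative \<Lambda>' t) (at t)"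
    and xy: "ud < x" "0 < x" "x \<le> y"
    and cond: "\<And>r. x \<le> r \<Longrightarrow> r \<le> y \<Longrightarrow> r * \<Lambda>' r + k \<ge> D"
  shows "D * ln y + ln (\<psi> y) - k * ln y \<le> D * ln x + ln (\<psi> x) - k * ln x"
proof -
  have "(\<lambda>r. D * ln r - (- ln (\<psi> r)) - k * ln r) y \<le> (\<lambda>r. D * ln r - (- ln (\<psi> r)) - k * ln r) x"
  proof (rule DERIV_nonpos_imp_nonincreasing[OF xy(3)])
    fix r assume r: "x \<le> r" "r \<le> y"
    then have r0: "r > 0" "r > ud" using xy by auto
    have "((\<lambda>r. D * ln r - (- ln (\<psi> r)) - k * ln r) has_real_derivative (D * (1/r) - \<Lambda>' r - k * (1/r))) (at r)"
    proof -
      have d1: "((\<lambda>r. D * ln r) has_real_derivative D * (1/r)) (at r)"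
        using r0 by (auto intro!: derivative_eq_intros)
      have d3: "((\<lambda>r. k * ln r) has_real_derivative k * (1/r)) (at r)"
        using r0 by (auto intro!: derivative_eq_intros)
      show ?thesis using DERIV_diff[OF DERIV_diff[OF d1 deriv[OF r0(2)]] d3] by simp
    qed
    moreover have "D * (1/r) - \<Lambda>' r - k * (1/r) = (D - r * \<Lambda>' r - k) / r"
      using r0 by (simp add: field_simps)
    moreover have "(D - r * \<Lambda>' r - k) / r \<le> 0"
      using cond[OF r] r0 by (simp add: divide_nonpos_pos)
    ultimately show "\<exists>y. ((\<lambda>r. D * ln r - (- ln (\<psi> r)) - k * ln r) has_real_derivative y) (at r) \<and> y \<le> 0"
      by metis
  qed
  then show ?thesis by simp
qed


lemma J_lower:
  fixes F0 :: "real \<Rightarrow> real"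
  assumes "x \<le> y" "\<And>r. x \<le> r \<Longrightarrow> r \<le> y \<Longrightarrow> c \<le> F0 r" "c \<ge> 0" "{x..y} \<subseteq> S"
  shows "ennreal (c * (y - x)) \<le> (\<integral>\<^sup>+r. ennreal (F0 r) * indicator S r \<partial>lborel)"
proof -
  have "ennreal (c * (y - x)) = (\<integral>\<^sup>+r. ennreal c * indicator {x..y} r \<partial>lborel)"
    using assms by (simp add: nn_integral_cmult_indicator ennreal_mult)
  also have "\<dots> \<le> (\<integral>\<^sup>+r. ennreal (F0 r) * indicator S r \<partial>lborel)"
    using assms by (intro nn_integral_mono) (auto split: split_indicator intro!: ennreal_leI)
  finally show ?thesis .
qed

lemma J_left:
  fixes F0 :: "real \<Rightarrow> real"
  assumes v: "0 < v" "v \<le> a" and k: "k > 0" and Fa: "F0 a \<ge> 0"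
    and P1: "\<And>r. v \<le> r \<Longrightarrow> r \<le> a \<Longrightarrow> F0 r \<le> F0 a * r powr k / a powr k"
  shows "(\<integral>\<^sup>+r. ennreal (F0 r) * indicator {v..<a} r \<partial>lborel) \<le> ennreal (F0 a * a / k)"
proof -
  define C where "C = F0 a / a powr k"
  have C: "C \<ge> 0" using Fa by (simp add: C_def)
  define H where "H r = C * (r powr (k+1) / (k+1))" for r
  have "(\<integral>\<^sup>+r. ennreal (F0 r) * indicator {v..<a} r \<partial>lborel)
      \<le> (\<integral>\<^sup>+r. ennreal (C * r powr k) * indicator {v..a} r \<partial>lborel)"
    using P1 by (intro nn_integral_mono) (auto split: split_indicator simp: C_def intro!: ennreal_leI)
  also have "\<dots> = ennreal (H a - H v)"
  proof (rule nn_integral_FTC_Icc)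
    show "(\<lambda>r. C * r powr k) \<in> borel_measurable borel" by measurable
    fix r assume r: "r \<in> {v..a}"
    then have "r > 0" using v by auto
    then have "((\<lambda>r. r powr (k+1)) has_real_derivative (k+1) * r powr (k + 1 - 1)) (at r)"
      by (rule has_real_derivative_powr)
    from DERIV_cmult[OF this, of "C / (k+1)"]
    have "((\<lambda>x. C / (k+1) * x powr (k+1)) has_real_derivative C / (k+1) * ((k+1) * r powr (k + 1 - 1))) (at r)" .
    moreover have "C / (k+1) * ((k+1) * r powr (k + 1 - 1)) = C * r powr k" using k by simp
    moreover have "H = (\<lambda>x. C / (k+1) * x powr (k+1))" by (auto simp: H_def)
    ultimately show "(H has_real_derivative C * r powr k) (at r)" by simp
    show "0 \<le> C * r powr k" using C by simp
  qed (use v in auto)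
  also have "\<dots> \<le> ennreal (H a)"
    using v C k by (intro ennreal_leI) (simp add: H_def)
  also have "H a = F0 a * a / (k+1)"
    using v k by (simp add: H_def C_def powr_add field_simps)
  also have "ennreal (F0 a * a / (k+1)) \<le> ennreal (F0 a * a / k)"
    using v k Fa by (intro ennreal_leI divide_left_mono) auto
  finally show ?thesis .
qed

lemma J_right:
  fixes F0 :: "real \<Rightarrow> real"
  assumes b: "0 < b" and k: "k > 1" and Fb: "F0 b \<ge> 0"
    and P2: "\<And>r. b \<le> r \<Longrightarrow> F0 r \<le> F0 b * b powr k / r powr k"
  shows "(\<integral>\<^sup>+r. ennreal (F0 r) * indicator {b<..} r \<partial>lborel) \<le> ennreal (F0 b * b / (k - 1))"
proof -
  define C where "C = F0 b * b powr k"
  have C: "C \<ge> 0" using Fb by (simp add: C_def)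
  define H where "H r = C * (r powr (1 - k) / (1 - k))" for r
  have "(\<integral>\<^sup>+r. ennreal (F0 r) * indicator {b<..} r \<partial>lborel)
      \<le> (\<integral>\<^sup>+r. ennreal (C * r powr (-k)) * indicator {b..} r \<partial>lborel)"
    using P2 by (intro nn_integral_mono) (auto split: split_indicator simp: C_def powr_minus_divide intro!: ennreal_leI)
  also have "\<dots> = ennreal (0 - H b)"
  proof (rule nn_integral_FTC_atLeast)
    show "(\<lambda>r. C * r powr (-k)) \<in> borel_measurable borel" by measurable
    fix r assume r: "b \<le> r"
    then have "r > 0" using b by auto
    then have "((\<lambda>r. r powr (1-k)) has_real_derivative (1-k) * r powr (1 - k - 1)) (at r)"
      by (rule has_real_derivative_powr)
    from DERIV_cmult[OF this, of "C / (1-k)"]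
    have "((\<lambda>x. C / (1-k) * x powr (1-k)) has_real_derivative C / (1-k) * ((1-k) * r powr (1 - k - 1))) (at r)" .
    moreover have "C / (1-k) * ((1-k) * r powr (1 - k - 1)) = C * r powr (-k)" using k by simp
    moreover have "H = (\<lambda>x. C / (1-k) * x powr (1-k))" by (auto simp: H_def)
    ultimately show "(H has_real_derivative C * r powr (-k)) (at r)" by simp
    show "0 \<le> C * r powr (-k)" using C by simp
  next
    have "((\<lambda>r. r powr (1 - k)) \<longlongrightarrow> 0) at_top"
      using k by (intro tendsto_neg_powr filterlim_ident) auto
    then have "((\<lambda>r. r powr (1 - k) / (1 - k)) \<longlongrightarrow> 0) at_top"
      by (rule tendsto_divide_zero)
    then have "((\<lambda>r. C * (r powr (1 - k) / (1 - k))) \<longlongrightarrow> 0) at_top"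
      by (rule tendsto_mult_right_zero)
    moreover have "H = (\<lambda>r. C * (r powr (1 - k) / (1 - k)))" by (auto simp: H_def)
    ultimately show "(H \<longlongrightarrow> 0) at_top" by simp
  qed
  also have "0 - H b = F0 b * b / (k - 1)"
    using b k by (simp add: H_def C_def powr_diff field_simps)
  finally show ?thesis .
qed


lemma prob_formula:
  fixes N :: "'a measure" and Y :: "'a \<Rightarrow> nat \<Rightarrow> real" and \<psi> \<psi>0 :: "real \<Rightarrow> real"
  assumes psi0m[measurable]: "\<psi>0 \<in> borel_measurable borel"
    and psi0nn: "\<And>r. \<psi>0 r \<ge> 0" and psi0neg: "\<And>r. r < 0 \<Longrightarrow> \<psi>0 r = 0"
    and psi0eq: "\<And>r. r \<ge> 0 \<Longrightarrow> \<psi>0 r = \<psi> r"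
    and dist: "distributed N (lebesgue_R d) Y (\<lambda>x. ennreal (c * \<psi> (enorm d x)))"
    and S[measurable]: "S \<in> sets borel"
  shows "emeasure N {w\<in>space N. enorm d (Y w) \<in> S} =
     ennreal c * ennreal (real (Suc d) * vR d) * (\<integral>\<^sup>+r. ennreal (r^d * \<psi>0 r) * indicator S r \<partial>lborel)"
proof -
  have Ym[measurable]: "Y \<in> N \<rightarrow>\<^sub>M lebesgue_R d" using dist by (simp add: distributed_def)
  have D: "distr N (lebesgue_R d) Y = density (lebesgue_R d) (\<lambda>x. ennreal (c * \<psi> (enorm d x)))"
    using dist by (simp add: distributed_def)
  have fm: "(\<lambda>x. ennreal (c * \<psi> (enorm d x))) \<in> borel_measurable (lebesgue_R d)"
    using dist by (simp add: distributed_def)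
  define B where "B = {x\<in>space (lebesgue_R d). enorm d x \<in> S}"
  have B[measurable]: "B \<in> sets (lebesgue_R d)" unfolding B_def by measurable
  have "{w\<in>space N. enorm d (Y w) \<in> S} = Y -` B \<inter> space N"
    using measurable_space[OF Ym] by (auto simp: B_def)
  then have "emeasure N {w\<in>space N. enorm d (Y w) \<in> S} = emeasure (distr N (lebesgue_R d) Y) B"
    by (simp add: emeasure_distr)
  also have "\<dots> = (\<integral>\<^sup>+x. ennreal (c * \<psi> (enorm d x)) * indicator B x \<partial>lebesgue_R d)"
    unfolding D using fm by (simp add: emeasure_density)
  also have "\<dots> = (\<integral>\<^sup>+x. (\<lambda>r. ennreal (c * \<psi>0 r) * indicator S r) (enorm d x) \<partial>lebesgue_R d)"
    by (intro nn_integral_cong) (auto simp: B_def psi0eq enorm_nonneg split: split_indicator)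
  also have "\<dots> = (\<integral>\<^sup>+r. ennreal (real (Suc d) * vR d * r ^ d) * indicator {0..} r * (ennreal (c * \<psi>0 r) * indicator S r) \<partial>lborel)"
    by (rule polar) measurable
  also have "\<dots> = (\<integral>\<^sup>+r. (ennreal c * ennreal (real (Suc d) * vR d)) * (ennreal (r^d * \<psi>0 r) * indicator S r) \<partial>lborel)"
  proof (intro nn_integral_cong)
    fix r :: real
    show "ennreal (real (Suc d) * vR d * r ^ d) * indicator {0..} r * (ennreal (c * \<psi>0 r) * indicator S r) =
          (ennreal c * ennreal (real (Suc d) * vR d)) * (ennreal (r^d * \<psi>0 r) * indicator S r)"
    proof (cases "r \<ge> 0")
      case True
      have "ennreal (real (Suc d) * vR d * r ^ d) = ennreal (real (Suc d) * vR d) * ennreal (r^d)"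
        using True vR(2) by (intro ennreal_mult) auto
      moreover have "ennreal (c * \<psi>0 r) = ennreal c * ennreal (\<psi>0 r)"
        using psi0nn by (intro ennreal_mult'') auto
      moreover have "ennreal (r^d * \<psi>0 r) = ennreal (r^d) * ennreal (\<psi>0 r)"
        using True psi0nn by (intro ennreal_mult) auto
      ultimately show ?thesis using True by (simp add: ac_simps)
    next
      case False
      then show ?thesis using psi0neg[of r] by simp
    qed
  qed
  also have "\<dots> = ennreal c * ennreal (real (Suc d) * vR d) * (\<integral>\<^sup>+r. ennreal (r^d * \<psi>0 r) * indicator S r \<partial>lborel)"
    by (rule nn_integral_cmult) measurable
  finally show ?thesis .
qed


definition JJ :: "(real \<Rightarrow> real) \<Rightarrow> nat \<Rightarrow> real set \<Rightarrow> ennreal" where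
  "JJ \<psi>0 d S = (\<integral>\<^sup>+r. ennreal (r^d * \<psi>0 r) * indicator S r \<partial>lborel)"

lemma exp_conv:
  assumes "r > 0" "\<psi> r > 0"
  shows "exp (real d * ln r + ln (\<psi> r) - k * ln r) = r ^ d * \<psi> r / r powr k"
proof -
  have "exp (real d * ln r) = r ^ d" using assms by (simp add: exp_of_nat_mult)
  moreover have "exp (k * ln r) = r powr k" using assms by (simp add: powr_def mult.commute)
  ultimately show ?thesis using assms by (simp add: exp_diff exp_add)
qed

lemma pointwise:
  fixes \<psi> \<Lambda>' :: "real \<Rightarrow> real"
  assumes deriv: "\<And>t. t > ud \<Longrightarrow> ((\<lambda>s. - ln (\<psi> s)) has_real_derivative \<Lambda>' t) (at t)"
    and pos: "\<And>t. t > ud \<Longrightarrow> \<psi> t > 0"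
    and xy: "ud < x" "0 < x" "x \<le> y"
    and cond: "\<And>r. x \<le> r \<Longrightarrow> r \<le> y \<Longrightarrow> r * \<Lambda>' r + k \<le> real d"
  shows "x ^ d * \<psi> x / x powr k \<le> y ^ d * \<psi> y / y powr k"
proof -
  have "real d * ln x + ln (\<psi> x) - k * ln x \<le> real d * ln y + ln (\<psi> y) - k * ln y"
    by (rule G_mono[OF deriv xy cond])
  then have "exp (real d * ln x + ln (\<psi> x) - k * ln x) \<le> exp (real d * ln y + ln (\<psi> y) - k * ln y)"
    by simp
  then show ?thesis using xy pos[of x] pos[of y] by (simp add: exp_conv)
qed

lemma pointwise':
  fixes \<psi> \<Lambda>' :: "real \<Rightarrow> real"
  assumes deriv: "\<And>t. t > ud \<Longrightarrow> ((\<lambda>s. - ln (\<psi> s)) has_real_derivative \<Lambda>' t) (at t)"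
    and pos: "\<And>t. t > ud \<Longrightarrow> \<psi> t > 0"
    and xy: "ud < x" "0 < x" "x \<le> y"
    and cond: "\<And>r. x \<le> r \<Longrightarrow> r \<le> y \<Longrightarrow> r * \<Lambda>' r + k \<ge> real d"
  shows "y ^ d * \<psi> y / y powr k \<le> x ^ d * \<psi> x / x powr k"
proof -
  have "real d * ln y + ln (\<psi> y) - k * ln y \<le> real d * ln x + ln (\<psi> x) - k * ln x"
    by (rule G_anti[OF deriv xy cond])
  then have "exp (real d * ln y + ln (\<psi> y) - k * ln y) \<le> exp (real d * ln x + ln (\<psi> x) - k * ln x)"
    by simp
  then show ?thesis using xy pos[of x] pos[of y] by (simp add: exp_conv)
qed

lemma main_bound:
  fixes \<psi> \<psi>0 \<Lambda>' :: "real \<Rightarrow> real" and d :: nat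
  assumes psi0m[measurable]: "\<psi>0 \<in> borel_measurable borel"
    and psi0nn: "\<And>r. \<psi>0 r \<ge> 0" and psi0neg: "\<And>r. r < 0 \<Longrightarrow> \<psi>0 r = 0"
    and psi0eq: "\<And>r. r \<ge> 0 \<Longrightarrow> \<psi>0 r = \<psi> r"
    and deriv: "\<And>t. t > ud \<Longrightarrow> ((\<lambda>s. - ln (\<psi> s)) has_real_derivative \<Lambda>' t) (at t)"
    and pos: "\<And>t. t > ud \<Longrightarrow> \<psi> t > 0"
    and Lmono: "\<And>s t. ud \<le> s \<Longrightarrow> s \<le> t \<Longrightarrow> s * \<Lambda>' s \<le> t * \<Lambda>' t"
    and d1: "d \<ge> 1" and v: "v > ud" "v > 0"
    and uL: "u * \<Lambda>' u = real d" and \<delta>: "\<delta> > 0" "\<delta> \<le> 1/2" and u6: "u \<ge> 6 * v"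
    and \<nu>: "\<nu> > 0" "\<delta>\<^sup>2 * \<nu> \<ge> 4"
    and kl: "real d - ((1-\<delta>)*u) * \<Lambda>' ((1-\<delta>)*u) \<ge> \<delta> * \<nu> / 2"
    and kr: "((1+\<delta>)*u) * \<Lambda>' ((1+\<delta>)*u) - real d \<ge> \<delta> * \<nu> / 2"
    and JU: "JJ \<psi>0 d UNIV < \<infinity>"
    and m1: "JJ \<psi>0 1 UNIV = ennreal m1" "m1 \<ge> 0"
    and cc: "(\<integral>\<^sup>+r. ennreal (\<psi>0 r) * indicator {2 * v .. 3 * v} r \<partial>lborel) = ennreal cc" "cc > 0"
  shows "1 - enn2real (JJ \<psi>0 d {(1-\<delta>)*u..(1+\<delta>)*u}) / enn2real (JJ \<psi>0 d UNIV)
           \<le> m1 / (v * cc * 2^d) + 10 / (\<delta>\<^sup>2 * \<nu>)"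
proof -
  define a where "a = (1-\<delta>)*u"
  define b where "b = (1+\<delta>)*u"
  define k1 where "k1 = real d - a * \<Lambda>' a"
  define k2 where "k2 = b * \<Lambda>' b - real d"
  define F0 where "F0 r = r^d * \<psi>0 r" for r
  have F0nn: "F0 r \<ge> 0" for r
  proof (cases "r \<ge> 0")
    case True then show ?thesis using psi0nn[of r] by (simp add: F0_def)
  next
    case False then show ?thesis using psi0neg[of r] by (simp add: F0_def)
  qed
  have F0pos: "r \<ge> v \<Longrightarrow> F0 r = r^d * \<psi> r" for r using v by (simp add: F0_def psi0eq)
  have J: "JJ \<psi>0 d S = (\<integral>\<^sup>+r. ennreal (F0 r) * indicator S r \<partial>lborel)" for S
    by (simp add: JJ_def F0_def)
  have F0m[measurable]: "F0 \<in> borel_measurable borel" unfolding F0_def by measurable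
  have u0: "u > 0" using u6 v by linarith
  have "(1-\<delta>)*u \<ge> (1/2)*u" using \<delta> u0 by (intro mult_right_mono) auto
  then have a3: "a \<ge> 3 * v" using u6 unfolding a_def by linarith
  have au: "a < u" using \<delta> u0 by (simp add: a_def algebra_simps)
  have ub: "u < b" using \<delta> u0 by (simp add: b_def algebra_simps)
  have k1: "k1 \<ge> \<delta> * \<nu> / 2" using kl by (simp add: k1_def a_def)
  have k2: "k2 \<ge> \<delta> * \<nu> / 2" using kr by (simp add: k2_def b_def)
  have dn: "\<delta> * \<nu> / 2 \<ge> \<delta>\<^sup>2 * \<nu>"
  proof -
    have "\<delta> * \<nu> * \<delta> \<le> \<delta> * \<nu> * (1/2)" using \<delta> \<nu> by (intro mult_left_mono) auto
    then show ?thesis by (simp add: power2_eq_square algebra_simps)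
  qed
  have k1p: "k1 > 0" using k1 mult_pos_pos[OF \<delta>(1) \<nu>(1)] by linarith
  have k2g: "k2 \<ge> 4" using k2 dn \<nu> by linarith
  have va: "v < a" using a3 v by linarith
  have P1: "F0 r \<le> F0 a * r powr k1 / a powr k1" if r: "v \<le> r" "r \<le> a" for r
  proof -
    have "r ^ d * \<psi> r / r powr k1 \<le> a ^ d * \<psi> a / a powr k1"
    proof (rule pointwise[OF deriv pos])
      show "ud < r" "0 < r" "r \<le> a" using r v by auto
      fix s assume s: "r \<le> s" "s \<le> a"
      have "s * \<Lambda>' s \<le> a * \<Lambda>' a" using Lmono[of s a] s r v by auto
      then show "s * \<Lambda>' s + k1 \<le> real d" by (simp add: k1_def)
    qed auto
    then have "F0 r / r powr k1 \<le> F0 a / a powr k1" using r va F0pos by auto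
    then show ?thesis using r v by (simp add: divide_le_eq)
  qed
  have P2: "F0 r \<le> F0 b * b powr k2 / r powr k2" if r: "b \<le> r" for r
  proof -
    have "r ^ d * \<psi> r / r powr (-k2) \<le> b ^ d * \<psi> b / b powr (-k2)"
    proof (rule pointwise'[OF deriv pos])
      show "ud < b" "0 < b" "b \<le> r" using r v ub u6 au va by auto
      fix s assume s: "b \<le> s" "s \<le> r"
      have "b * \<Lambda>' b \<le> s * \<Lambda>' s" using Lmono[of b s] s ub au va v by auto
      then show "s * \<Lambda>' s + - k2 \<ge> real d" by (simp add: k2_def)
    qed auto
    then have "F0 r * r powr k2 \<le> F0 b * b powr k2"
      using r ub au va v F0pos by (simp add: powr_minus divide_inverse)
    then show ?thesis using r ub au va v by (simp add: le_divide_eq)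
  qed
  have P3: "F0 a \<le> F0 r" if r: "a \<le> r" "r \<le> u" for r
  proof -
    have "a ^ d * \<psi> a / a powr 0 \<le> r ^ d * \<psi> r / r powr 0"
    proof (rule pointwise[OF deriv pos])
      show "ud < a" "0 < a" "a \<le> r" using r va v by auto
      fix s assume s: "a \<le> s" "s \<le> r"
      have "s * \<Lambda>' s \<le> u * \<Lambda>' u" using Lmono[of s u] s r va v by auto
      then show "s * \<Lambda>' s + 0 \<le> real d" using uL by simp
    qed auto
    then show ?thesis using r va v F0pos by auto
  qed
  have P4: "F0 b \<le> F0 r" if r: "u \<le> r" "r \<le> b" for r
  proof -
    have "b ^ d * \<psi> b / b powr 0 \<le> r ^ d * \<psi> r / r powr 0"
    proof (rule pointwise'[OF deriv pos])
      show "ud < r" "0 < r" "r \<le> b" using r au va v by auto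
      fix s assume s: "r \<le> s" "s \<le> b"
      have "u * \<Lambda>' u \<le> s * \<Lambda>' s" using Lmono[of u s] s r au va v by auto
      then show "s * \<Lambda>' s + 0 \<ge> real d" using uL by simp
    qed auto
    then show ?thesis using r au ub va v F0pos by auto
  qed
  have Fa: "F0 a > 0" using F0pos[of a] va v pos[of a] by auto
  have Fb: "F0 b > 0" using F0pos[of b] va au ub v pos[of b] by auto
  have bp: "b > 0" using ub u0 by linarith
  have A1: "JJ \<psi>0 d {v..<a} \<le> ennreal (F0 a * a / k1)"
    unfolding J by (rule J_left[OF v(2) _ k1p]) (use va F0nn P1 in auto)
  have A2: "JJ \<psi>0 d {b<..} \<le> ennreal (F0 b * b / (k2 - 1))"
    unfolding J by (rule J_right[OF bp]) (use k2g F0nn P2 in auto)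
  have A3: "ennreal (F0 a * (u - a)) \<le> JJ \<psi>0 d {a..b}"
    unfolding J by (rule J_lower) (use au ub P3 F0nn in auto)
  have A4: "ennreal (F0 b * (b - u)) \<le> JJ \<psi>0 d {a..b}"
    unfolding J by (rule J_lower) (use au ub P4 F0nn in auto)
  have A0: "JJ \<psi>0 d {..<v} \<le> ennreal (v^(d-1) * m1)"
  proof -
    have "JJ \<psi>0 d {..<v} \<le> (\<integral>\<^sup>+r. ennreal (v^(d-1)) * (ennreal (r^1 * \<psi>0 r) * indicator UNIV r) \<partial>lborel)"
      unfolding J
    proof (rule nn_integral_mono)
      fix r :: real
      show "ennreal (F0 r) * indicator {..<v} r \<le> ennreal (v^(d-1)) * (ennreal (r^1 * \<psi>0 r) * indicator UNIV r)"
      proof (cases "0 \<le> r \<and> r < v")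
        case True
        have "r^d = r^(d-1) * r" using power_minus_mult[of d r] d1 by simp
        also have "\<dots> \<le> v^(d-1) * r" using True by (intro mult_right_mono power_mono) auto
        finally have "F0 r \<le> v^(d-1) * (r * \<psi>0 r)"
          unfolding F0_def using psi0nn[of r] by (simp add: mult.assoc[symmetric] mult_right_mono)
        then show ?thesis using True psi0nn[of r] v
          by (simp add: ennreal_mult[symmetric])
      next
        case False
        then show ?thesis using psi0neg[of r] by (auto simp: F0_def split: split_indicator)
      qed
    qed
    also have "\<dots> = ennreal (v^(d-1)) * JJ \<psi>0 1 UNIV"
      unfolding JJ_def by (rule nn_integral_cmult) measurable
    also have "\<dots> = ennreal (v^(d-1) * m1)" using m1 v by (simp add: ennreal_mult)
    finally show ?thesis .
  qed
  have T0: "ennreal ((2 * v)^d * cc) \<le> JJ \<psi>0 d UNIV"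
  proof -
    have "ennreal ((2 * v)^d * cc) = ennreal ((2 * v)^d) * (\<integral>\<^sup>+r. ennreal (\<psi>0 r) * indicator {2 * v .. 3 * v} r \<partial>lborel)"
      using cc v by (simp add: ennreal_mult)
    also have "\<dots> = (\<integral>\<^sup>+r. ennreal ((2 * v)^d) * (ennreal (\<psi>0 r) * indicator {2 * v .. 3 * v} r) \<partial>lborel)"
      by (rule nn_integral_cmult[symmetric]) measurable
    also have "\<dots> \<le> JJ \<psi>0 d UNIV"
      unfolding J
    proof (rule nn_integral_mono)
      fix r :: real
      show "ennreal ((2 * v)^d) * (ennreal (\<psi>0 r) * indicator {2 * v .. 3 * v} r) \<le> ennreal (F0 r) * indicator UNIV r"
      proof (cases "r \<in> {2 * v .. 3 * v}")
        case True
        have "(2 * v)^d * \<psi>0 r \<le> r^d * \<psi>0 r"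
          using True v psi0nn[of r] by (intro mult_right_mono power_mono) auto
        then show ?thesis using True v psi0nn[of r]
          by (simp add: F0_def ennreal_mult[symmetric])
      qed simp
    qed
    finally show ?thesis .
  qed
  have part: "JJ \<psi>0 d UNIV = (JJ \<psi>0 d {..<v} + JJ \<psi>0 d {v..<a}) + (JJ \<psi>0 d {a..b} + JJ \<psi>0 d {b<..})"
  proof -
    have ind: "(indicator UNIV r :: ennreal) = (indicator {..<v} r + indicator {v..<a} r) + (indicator {a..b} r + indicator {b<..} r)" for r
    proof -
      consider "r < v" | "v \<le> r \<and> r < a" | "a \<le> r \<and> r \<le> b" | "b < r" by linarith
      then show ?thesis
      proof cases
        case 1 then show ?thesis using va au ub by (simp add: indicator_def)
      next
        case 2 then show ?thesis using va au ub by (simp add: indicator_def)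
      next
        case 3 then show ?thesis using va au ub by (simp add: indicator_def)
      next
        case 4 then show ?thesis using va au ub by (simp add: indicator_def)
      qed
    qed
    have "JJ \<psi>0 d UNIV = (\<integral>\<^sup>+r. (ennreal (F0 r) * indicator {..<v} r + ennreal (F0 r) * indicator {v..<a} r)
        + (ennreal (F0 r) * indicator {a..b} r + ennreal (F0 r) * indicator {b<..} r) \<partial>lborel)"
      unfolding J by (rule nn_integral_cong) (simp only: ind distrib_left)
    also have "\<dots> = (\<integral>\<^sup>+r. ennreal (F0 r) * indicator {..<v} r + ennreal (F0 r) * indicator {v..<a} r \<partial>lborel)
        + (\<integral>\<^sup>+r. ennreal (F0 r) * indicator {a..b} r + ennreal (F0 r) * indicator {b<..} r \<partial>lborel)"
      by (rule nn_integral_add) measurable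
    also have "(\<integral>\<^sup>+r. ennreal (F0 r) * indicator {..<v} r + ennreal (F0 r) * indicator {v..<a} r \<partial>lborel)
        = JJ \<psi>0 d {..<v} + JJ \<psi>0 d {v..<a}"
      unfolding J by (rule nn_integral_add) measurable
    also have "(\<integral>\<^sup>+r. ennreal (F0 r) * indicator {a..b} r + ennreal (F0 r) * indicator {b<..} r \<partial>lborel)
        = JJ \<psi>0 d {a..b} + JJ \<psi>0 d {b<..}"
      unfolding J by (rule nn_integral_add) measurable
    finally show ?thesis .
  qed
  have JUt: "JJ \<psi>0 d UNIV < \<top>" using JU by simp
  define X0 where "X0 = JJ \<psi>0 d {..<v}"
  define X1 where "X1 = JJ \<psi>0 d {v..<a}"
  define XA where "XA = JJ \<psi>0 d {a..b}"
  define X2 where "X2 = JJ \<psi>0 d {b<..}"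
  have fin: "X0 < \<top>" "X1 < \<top>" "XA < \<top>" "X2 < \<top>"
    using JUt unfolding part X0_def X1_def XA_def X2_def by simp_all
  define t0 where "t0 = enn2real X0"
  define t1 where "t1 = enn2real X1"
  define ta where "ta = enn2real XA"
  define t2 where "t2 = enn2real X2"
  define t where "t = enn2real (JJ \<psi>0 d UNIV)"
  have tsum: "t = t0 + t1 + ta + t2"
    using fin unfolding t_def part t0_def t1_def ta_def t2_def X0_def X1_def XA_def X2_def
    by (simp add: enn2real_plus)
  have nn: "t0 \<ge> 0" "t1 \<ge> 0" "t2 \<ge> 0" by (simp_all add: t0_def t1_def t2_def)
  have k2m: "k2 - 1 > 0" using k2g by linarith
  have b1: "t1 \<le> F0 a * a / k1"
    unfolding t1_def X1_def by (rule enn2real_leI) (use A1 Fa va v k1p in auto)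
  have b2: "t2 \<le> F0 b * b / (k2 - 1)"
    unfolding t2_def X2_def by (rule enn2real_leI) (use A2 Fb bp k2m in auto)
  have b0: "t0 \<le> v^(d-1) * m1"
    unfolding t0_def X0_def by (rule enn2real_leI) (use A0 v m1 in auto)
  have b3: "F0 a * (u - a) \<le> ta"
    using enn2real_mono[OF A3 fin(3)[unfolded XA_def]] Fa au unfolding ta_def XA_def by simp
  have b4: "F0 b * (b - u) \<le> ta"
    using enn2real_mono[OF A4 fin(3)[unfolded XA_def]] Fb ub unfolding ta_def XA_def by simp
  have bT: "(2 * v)^d * cc \<le> t"
    using enn2real_mono[OF T0 JUt] v cc unfolding t_def by simp
  define p where "p = F0 a * (u - a)"
  define q where "q = F0 b * (b - u)"
  define w where "w = (2 * v)^d * cc"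
  have pp: "p > 0" using Fa au by (simp add: p_def)
  have qp: "q > 0" using Fb ub by (simp add: q_def)
  have wp: "w > 0" using v cc by (simp add: w_def)
  have tap: "ta \<ge> p" using b3 by (simp add: p_def)
  have taq: "ta \<ge> q" using b4 by (simp add: q_def)
  have tge: "t \<ge> ta" using tsum nn by linarith
  have tw: "t \<ge> w" using bT by (simp add: w_def)
  have tpos: "t > 0" using tw wp by linarith
  have step1: "1 - ta / t \<le> t0 / w + t1 / p + t2 / q"
  proof -
    have "1 - ta / t = (t - ta) / t" using tpos by (simp add: diff_divide_distrib)
    also have "\<dots> = (t0 + t1 + t2) / t" using tsum by simp
    also have "\<dots> = t0 / t + t1 / t + t2 / t" by (simp add: add_divide_distrib)
    also have "t0 / t \<le> t0 / w" using nn tw wp by (intro frac_le) auto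
    also have "t1 / t \<le> t1 / p" using nn tge tap pp by (intro frac_le) auto
    also have "t2 / t \<le> t2 / q" using nn tge taq qp by (intro frac_le) auto
    finally show ?thesis by simp
  qed
  have e0: "t0 / w \<le> m1 / (v * cc * 2^d)"
  proof -
    have weq: "w = (v^(d-1) * v) * cc * 2^d" unfolding w_def
      using power_minus_mult[of d v] d1 by (simp add: power_mult_distrib)
    have "t0 / w \<le> (v^(d-1) * m1) / w" using b0 wp by (intro divide_right_mono) auto
    also have "\<dots> = (v^(d-1) * m1) / ((v^(d-1) * v) * cc * 2^d)" using weq by simp
    also have "(v^(d-1) * m1) / ((v^(d-1) * v) * cc * 2^d) = m1 / (v * cc * 2^d)"
      using v by (simp add: field_simps)
    finally show ?thesis .
  qed
  have ua: "u - a = \<delta> * u" by (simp add: a_def algebra_simps)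
  have bu: "b - u = \<delta> * u" by (simp add: b_def algebra_simps)
  have dnp: "\<delta>\<^sup>2 * \<nu> > 0" using \<nu> by linarith
  have e1: "t1 / p \<le> 2 / (\<delta>\<^sup>2 * \<nu>)"
  proof -
    have "t1 / p \<le> (F0 a * a / k1) / p" using b1 pp by (intro divide_right_mono) auto
    also have "\<dots> = a / (k1 * \<delta> * u)" using Fa k1p \<delta> u0 by (simp add: p_def ua field_simps)
    also have "\<dots> \<le> u / ((\<delta>\<^sup>2 * \<nu> / 2) * u)"
    proof (rule frac_le)
      show "0 \<le> u" "a \<le> u" using u0 au by auto
      show "0 < \<delta>\<^sup>2 * \<nu> / 2 * u" using dnp u0 by simp
      have "k1 * \<delta> \<ge> (\<delta> * \<nu> / 2) * \<delta>" using k1 \<delta> by (intro mult_right_mono) auto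
      then have "k1 * \<delta> \<ge> \<delta>\<^sup>2 * \<nu> / 2" by (simp add: power2_eq_square algebra_simps)
      then show "\<delta>\<^sup>2 * \<nu> / 2 * u \<le> k1 * \<delta> * u" using u0 by (intro mult_right_mono) auto
    qed
    also have "\<dots> = 2 / (\<delta>\<^sup>2 * \<nu>)" using u0 dnp by (simp add: field_simps)
    finally show ?thesis .
  qed
  have e2: "t2 / q \<le> 8 / (\<delta>\<^sup>2 * \<nu>)"
  proof -
    have "t2 / q \<le> (F0 b * b / (k2 - 1)) / q" using b2 qp by (intro divide_right_mono) auto
    also have "\<dots> = b / ((k2 - 1) * \<delta> * u)" using Fb k2m \<delta> u0 by (simp add: q_def bu field_simps)
    also have "\<dots> \<le> (2 * u) / ((\<delta>\<^sup>2 * \<nu> / 4) * u)"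
    proof (rule frac_le)
      show "0 \<le> 2 * u" "b \<le> 2 * u" using u0 \<delta> by (auto simp: b_def algebra_simps)
      show "0 < \<delta>\<^sup>2 * \<nu> / 4 * u" using dnp u0 by simp
      have "k2 - 1 \<ge> \<delta> * \<nu> / 4" using k2 k2g by linarith
      then have "(k2 - 1) * \<delta> \<ge> (\<delta> * \<nu> / 4) * \<delta>" using \<delta> by (intro mult_right_mono) auto
      then have "(k2 - 1) * \<delta> \<ge> \<delta>\<^sup>2 * \<nu> / 4" by (simp add: power2_eq_square algebra_simps)
      then show "\<delta>\<^sup>2 * \<nu> / 4 * u \<le> (k2 - 1) * \<delta> * u" using u0 by (intro mult_right_mono) auto
    qed
    also have "\<dots> = 8 / (\<delta>\<^sup>2 * \<nu>)" using u0 dnp by (simp add: field_simps)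
    finally show ?thesis .
  qed
  have "1 - ta / t \<le> m1 / (v * cc * 2^d) + 10 / (\<delta>\<^sup>2 * \<nu>)"
  proof -
    have h: "2 / (\<delta>\<^sup>2 * \<nu>) + 8 / (\<delta>\<^sup>2 * \<nu>) = 10 / (\<delta>\<^sup>2 * \<nu>)"
      using dnp by (simp add: field_simps)
    have "t0 / w + t1 / p + t2 / q \<le> m1 / (v * cc * 2^d) + 2 / (\<delta>\<^sup>2 * \<nu>) + 8 / (\<delta>\<^sup>2 * \<nu>)"
      using e0 e1 e2 by (intro add_mono) auto
    then show ?thesis using step1 h by (simp only: add.assoc)
  qed
  then show ?thesis unfolding ta_def t_def XA_def a_def b_def .
qed


theorem proposition1:
  fixes \<psi> :: "real \<Rightarrow> real"
    and c :: "nat \<Rightarrow> real"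
    and M :: "nat \<Rightarrow> 'a measure"
    and X :: "nat \<Rightarrow> 'a \<Rightarrow> (nat \<Rightarrow> real)"
    and u_dd :: real
    and \<Lambda>' :: "real \<Rightarrow> real"
    and L' :: "real \<Rightarrow> real"
    and u :: "nat \<Rightarrow> real"
    and \<epsilon> :: "nat \<Rightarrow> real"
  assumes psi_meas: "\<psi> \<in> borel_measurable (restrict_space borel {0..})"
    and psi_nonneg: "\<forall>t\<ge>0. \<psi> t \<ge> 0"
    and moments: "\<forall>d::nat\<ge>1. 0 < (\<integral>\<^sup>+ t\<in>{0..}. ennreal (t ^ d * \<psi> t) \<partial>lborel)
                      \<and> (\<integral>\<^sup>+ t\<in>{0..}. ennreal (t ^ d * \<psi> t) \<partial>lborel) < \<infinity>"
    and not_compact_supp: "\<forall>R. \<exists>t\<ge>R. \<psi> t \<noteq> 0"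
    and prob: "\<forall>d\<ge>1. prob_space (M d)"
    and dens: "\<forall>d\<ge>1. distributed (M d) (lebesgue_R d) (X d)
                        (\<lambda>x. ennreal (c d * \<psi> (enorm d x)))"
    and psi_pos: "\<forall>t\<ge>u_dd. \<psi> t > 0"
    and Lambda_deriv: "\<forall>t\<ge>u_dd. ((\<lambda>s. - ln (\<psi> s)) has_real_derivative \<Lambda>' t) (at t within {u_dd..})"
    and L_incr: "strict_mono_on {u_dd..} (\<lambda>t. t * \<Lambda>' t)"
    and M_infty: "filterlim (\<lambda>t. (t * \<Lambda>' t) / ln t) at_top at_top"
    and M_lower: "\<forall>e. 0 < e \<and> e < 1 \<longrightarrow>
        Limsup at_top (\<lambda>t. ereal ((((1 - e) * t) * \<Lambda>' ((1 - e) * t) / ln ((1 - e) * t))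
                                   / ((t * \<Lambda>' t) / ln t))) \<le> 1"
    and M_upper: "\<forall>e. 0 < e \<and> e < 1 \<longrightarrow>
        Liminf at_top (\<lambda>t. ereal ((((1 + e) * t) * \<Lambda>' ((1 + e) * t) / ln ((1 + e) * t))
                                   / ((t * \<Lambda>' t) / ln t))) \<ge> 1"
    and u_def: "\<forall>\<^sub>F d in sequentially. u d \<ge> u_dd \<and> u d * \<Lambda>' (u d) = real d"
    and L_deriv: "\<forall>t\<ge>u_dd. ((\<lambda>s. s * \<Lambda>' s) has_real_derivative L' t) (at t within {u_dd..})"
    and nu_infty: "filterlim (\<lambda>d. u d * L' (u d)) at_top sequentially"
    and omega: "\<exists>\<omega> :: nat \<Rightarrow> real. filterlim \<omega> at_top sequentially \<and>
        (\<forall>\<^sub>F d in sequentially. \<forall>e::real.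
            e\<^sup>2 \<le> \<omega> d / (u d * L' (u d)) \<longrightarrow>
            \<bar>u d * \<Lambda>' (u d) - ((1 - e) * u d) * \<Lambda>' ((1 - e) * u d) - e * u d * L' (u d)\<bar>
              \<le> \<bar>e\<bar> * (u d * L' (u d)) / \<omega> d)"
    and eps_pos: "\<forall>d. \<epsilon> d > 0"
    and eps_large: "filterlim (\<lambda>d. \<epsilon> d * sqrt (u d * L' (u d))) at_top sequentially"
  shows "(\<lambda>d. measure (M d) {w \<in> space (M d).
            1 - \<epsilon> d \<le> enorm d (X d w) / u d \<and> enorm d (X d w) / u d \<le> 1 + \<epsilon> d})
         \<longlonglongrightarrow> 1"
proof -
  define \<psi>0 where "\<psi>0 r = (if r \<ge> 0 then \<psi> r else 0)" for r
  have psi0m[measurable]: "\<psi>0 \<in> borel_measurable borel"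
  proof -
    have "(\<lambda>x. indicator {0..} x *\<^sub>R \<psi> x) \<in> borel_measurable borel"
      using psi_meas by (subst (asm) borel_measurable_restrict_space_iff) auto
    moreover have "(\<lambda>x. indicator {0..} x *\<^sub>R \<psi> x) = \<psi>0"
      by (auto simp: \<psi>0_def fun_eq_iff)
    ultimately show ?thesis by simp
  qed
  have psi0nn: "\<And>r. \<psi>0 r \<ge> 0" using psi_nonneg by (simp add: \<psi>0_def)
  have psi0neg: "\<And>r. r < 0 \<Longrightarrow> \<psi>0 r = 0" by (simp add: \<psi>0_def)
  have psi0eq: "\<And>r. r \<ge> 0 \<Longrightarrow> \<psi>0 r = \<psi> r" by (simp add: \<psi>0_def)
  have JUfin: "JJ \<psi>0 d UNIV < \<infinity>" and JUpos: "JJ \<psi>0 d UNIV > 0" if d: "d \<ge> 1" for d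
  proof -
    have "JJ \<psi>0 d UNIV = (\<integral>\<^sup>+ t\<in>{0..}. ennreal (t ^ d * \<psi> t) \<partial>lborel)"
      unfolding JJ_def by (rule nn_integral_cong) (auto simp: \<psi>0_def split: split_indicator)
    then show "JJ \<psi>0 d UNIV < \<infinity>" "JJ \<psi>0 d UNIV > 0" using moments d by auto
  qed
  have P: "measure (M d) {w\<in>space (M d). enorm d (X d w) \<in> S} = enn2real (JJ \<psi>0 d S) / enn2real (JJ \<psi>0 d UNIV)"
    if d: "d \<ge> 1" and S: "S \<in> sets borel" for d S
  proof -
    define \<kappa> where "\<kappa> = ennreal (c d) * ennreal (real (Suc d) * vR d)"
    have dist: "distributed (M d) (lebesgue_R d) (X d) (\<lambda>x. ennreal (c d * \<psi> (enorm d x)))"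
      using dens d by auto
    interpret prob_space "M d" using prob d by auto
    have E: "emeasure (M d) {w\<in>space (M d). enorm d (X d w) \<in> T} = \<kappa> * JJ \<psi>0 d T" if "T \<in> sets borel" for T
      unfolding \<kappa>_def JJ_def by (rule prob_formula[OF psi0m psi0nn psi0neg psi0eq dist that])
    have "1 = emeasure (M d) {w\<in>space (M d). enorm d (X d w) \<in> UNIV}" by (simp add: emeasure_space_1)
    also have "\<dots> = \<kappa> * JJ \<psi>0 d UNIV" by (rule E) simp
    finally have one: "1 = enn2real \<kappa> * enn2real (JJ \<psi>0 d UNIV)"
      by (metis enn2real_1 enn2real_mult)
    have "measure (M d) {w\<in>space (M d). enorm d (X d w) \<in> S} = enn2real \<kappa> * enn2real (JJ \<psi>0 d S)"
      unfolding measure_def using E[OF S] by (simp add: enn2real_mult)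
    also have "\<dots> = enn2real (JJ \<psi>0 d S) / enn2real (JJ \<psi>0 d UNIV)"
    proof -
      have nz: "enn2real (JJ \<psi>0 d UNIV) \<noteq> 0" using one by auto
      then have "enn2real \<kappa> = 1 / enn2real (JJ \<psi>0 d UNIV)" using one by (simp add: eq_divide_eq)
      then show ?thesis by simp
    qed
    finally show ?thesis .
  qed
  have Lmono: "\<And>s t. u_dd \<le> s \<Longrightarrow> s \<le> t \<Longrightarrow> s * \<Lambda>' s \<le> t * \<Lambda>' t"
    using L_incr by (rule strict_mono_on_leD) auto
  have deriv: "\<And>t. t > u_dd \<Longrightarrow> ((\<lambda>s. - ln (\<psi> s)) has_real_derivative \<Lambda>' t) (at t)"
    using Lambda_deriv by (rule deriv_at)
  have pos: "\<And>t. t > u_dd \<Longrightarrow> \<psi> t > 0" using psi_pos by auto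
  obtain \<omega> :: "nat \<Rightarrow> real" where \<omega>lim: "filterlim \<omega> at_top sequentially"
    and \<omega>ev: "\<forall>\<^sub>F d in sequentially. \<forall>e::real.
            e\<^sup>2 \<le> \<omega> d / (u d * L' (u d)) \<longrightarrow>
            \<bar>u d * \<Lambda>' (u d) - ((1 - e) * u d) * \<Lambda>' ((1 - e) * u d) - e * u d * L' (u d)\<bar>
              \<le> \<bar>e\<bar> * (u d * L' (u d)) / \<omega> d"
    using omega by blast
  define \<nu> where "\<nu> d = u d * L' (u d)" for d
  define \<delta> where "\<delta> d = min (\<epsilon> d) (min (sqrt (\<omega> d / \<nu> d)) (1/2))" for d
  define v where "v = max u_dd 1 + 1"
  have v: "v > u_dd" "v > 0" by (auto simp: v_def)
  have ulim: "filterlim u at_top sequentially"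
  proof (subst filterlim_at_top, intro allI)
    fix R :: real
    define R' where "R' = max R u_dd"
    have "\<forall>\<^sub>F d in sequentially. real d > R' * \<Lambda>' R'"
      using filterlim_real_sequentially by (simp add: filterlim_at_top_dense)
    then show "\<forall>\<^sub>F d in sequentially. R \<le> u d"
      using u_def
    proof eventually_elim
      case (elim d)
      show ?case
      proof (rule ccontr)
        assume "\<not> R \<le> u d"
        then have "u d \<le> R'" by (simp add: R'_def)
        then have "u d * \<Lambda>' (u d) \<le> R' * \<Lambda>' R'" using Lmono[of "u d" R'] elim by auto
        then show False using elim by auto
      qed
    qed
  qed
  have rholim: "filterlim (\<lambda>d. (\<delta> d)\<^sup>2 * \<nu> d) at_top sequentially"
  proof (subst filterlim_at_top, intro allI)
    fix B :: real
    define s where "s = sqrt (max B 0)"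
    have s: "s \<ge> 0" "s\<^sup>2 \<ge> B" by (auto simp: s_def)
    have "\<forall>\<^sub>F d in sequentially. s \<le> \<epsilon> d * sqrt (\<nu> d)"
      using eps_large unfolding filterlim_at_top \<nu>_def by (rule spec)
    moreover have "\<forall>\<^sub>F d in sequentially. max B 0 \<le> \<omega> d"
      using \<omega>lim unfolding filterlim_at_top by (rule spec)
    moreover have "\<forall>\<^sub>F d in sequentially. 4 * max B 0 + 1 \<le> \<nu> d"
      using nu_infty unfolding filterlim_at_top \<nu>_def by (rule spec)
    ultimately show "\<forall>\<^sub>F d in sequentially. B \<le> (\<delta> d)\<^sup>2 * \<nu> d"
    proof eventually_elim
      case (elim d)
      have \<nu>p: "\<nu> d > 0" using elim by linarith
      have \<omega>p: "\<omega> d \<ge> 0" using elim by linarith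
      consider "\<delta> d = \<epsilon> d" | "\<delta> d = sqrt (\<omega> d / \<nu> d)" | "\<delta> d = 1/(2::real)"
        unfolding \<delta>_def by linarith
      then show ?case
      proof cases
        case 1
        have "s\<^sup>2 \<le> (\<epsilon> d * sqrt (\<nu> d))\<^sup>2" using elim s by (intro power_mono) auto
        also have "\<dots> = (\<epsilon> d)\<^sup>2 * \<nu> d" using \<nu>p by (simp add: power_mult_distrib)
        finally show ?thesis using 1 s by simp
      next
        case 2
        have "(\<delta> d)\<^sup>2 * \<nu> d = \<omega> d" using 2 \<nu>p \<omega>p by simp
        then show ?thesis using elim by linarith
      next
        case 3
        have "(\<delta> d)\<^sup>2 * \<nu> d = \<nu> d / 4" by (subst 3) (simp add: power2_eq_square)
        then show ?thesis using elim by linarith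
      qed
    qed
  qed
  define m1 where "m1 = enn2real (JJ \<psi>0 1 UNIV)"
  have m1: "JJ \<psi>0 1 UNIV = ennreal m1" "m1 \<ge> 0"
    using JUfin[of 1] by (auto simp: m1_def ennreal_enn2real_if)
  define CC where "CC = (\<integral>\<^sup>+r. ennreal (\<psi>0 r) * indicator {2 * v .. 3 * v} r \<partial>lborel)"
  have CCfin: "CC < \<top>"
  proof -
    have "CC \<le> (\<integral>\<^sup>+r. ennreal (1 / (2 * v)) * (ennreal (r^1 * \<psi>0 r) * indicator UNIV r) \<partial>lborel)"
      unfolding CC_def
    proof (rule nn_integral_mono)
      fix r :: real
      show "ennreal (\<psi>0 r) * indicator {2 * v .. 3 * v} r \<le> ennreal (1 / (2 * v)) * (ennreal (r^1 * \<psi>0 r) * indicator UNIV r)"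
      proof (cases "r \<in> {2 * v .. 3 * v}")
        case True
        have "1 \<le> r / (2 * v)" using True v by (simp add: field_simps)
        then have "1 * \<psi>0 r \<le> (r / (2 * v)) * \<psi>0 r" using psi0nn[of r] by (intro mult_right_mono) auto
        then have "\<psi>0 r \<le> 1 / (2 * v) * (r * \<psi>0 r)" by simp
        then show ?thesis using True v psi0nn[of r] by (simp add: ennreal_mult[symmetric])
      qed simp
    qed
    also have "\<dots> = ennreal (1 / (2 * v)) * JJ \<psi>0 1 UNIV"
      unfolding JJ_def by (rule nn_integral_cmult) measurable
    also have "\<dots> < \<top>" using m1 by (simp add: ennreal_mult_less_top)
    finally show ?thesis .
  qed
  have CCpos: "CC \<noteq> 0"
  proof
    assume "CC = 0"
    then have "AE r in lborel. ennreal (\<psi>0 r) * indicator {2 * v .. 3 * v} r = 0"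
      unfolding CC_def by (subst (asm) nn_integral_0_iff_AE) auto
    then have "AE r in lborel. r \<notin> {2 * v .. 3 * v}"
    proof (rule AE_mp, intro AE_I2 impI)
      fix r :: real assume "ennreal (\<psi>0 r) * indicator {2 * v .. 3 * v} r = 0"
      moreover have "r \<in> {2 * v .. 3 * v} \<Longrightarrow> \<psi>0 r > 0" using v pos[of r] psi0eq[of r] by auto
      ultimately show "r \<notin> {2 * v .. 3 * v}" by (auto split: split_indicator)
    qed
    then have "emeasure lborel {2 * v .. 3 * v} = 0"
      by (subst (asm) AE_iff_measurable[where N="{2 * v .. 3 * v}"]) auto
    then show False using v by simp
  qed
  define cc where "cc = enn2real CC"
  have cc: "CC = ennreal cc" "cc > 0"
    using CCfin CCpos by (auto simp: cc_def ennreal_enn2real_if enn2real_positive_iff less_top zero_less_iff_neq_zero)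
  define \<eta> where "\<eta> d = m1 / (v * cc * 2^d) + 10 / ((\<delta> d)\<^sup>2 * \<nu> d)" for d
  have \<eta>lim: "\<eta> \<longlonglongrightarrow> 0"
  proof -
    have "(\<lambda>d. m1 / (v * cc) * inverse ((2::real) ^ d)) \<longlonglongrightarrow> 0"
      by (intro tendsto_mult_right_zero LIMSEQ_inverse_realpow_zero) simp
    moreover have "(\<lambda>d. m1 / (v * cc) * inverse ((2::real) ^ d)) = (\<lambda>d. m1 / (v * cc * 2^d))"
      by (simp add: fun_eq_iff field_simps)
    moreover have "(\<lambda>d. 10 * inverse ((\<delta> d)\<^sup>2 * \<nu> d)) \<longlonglongrightarrow> 0"
      by (intro tendsto_mult_right_zero tendsto_inverse_0_at_top rholim)
    moreover have "(\<lambda>d. 10 * inverse ((\<delta> d)\<^sup>2 * \<nu> d)) = (\<lambda>d. 10 / ((\<delta> d)\<^sup>2 * \<nu> d))"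
      by (simp add: fun_eq_iff divide_inverse)
    ultimately have "(\<lambda>d. m1 / (v * cc * 2^d) + 10 / ((\<delta> d)\<^sup>2 * \<nu> d)) \<longlonglongrightarrow> 0 + 0"
      by (metis tendsto_add)
    then show ?thesis by (simp add: \<eta>_def[abs_def])
  qed
  define Pe where "Pe d = measure (M d) {w \<in> space (M d).
            1 - \<epsilon> d \<le> enorm d (X d w) / u d \<and> enorm d (X d w) / u d \<le> 1 + \<epsilon> d}" for d
  have ev: "\<forall>\<^sub>F d in sequentially. 1 - \<eta> d \<le> Pe d \<and> Pe d \<le> 1"
  proof -
    have e1: "\<forall>\<^sub>F d in sequentially. (1::nat) \<le> d" by (rule eventually_ge_at_top)
    have e2: "\<forall>\<^sub>F d in sequentially. 2 \<le> \<omega> d" using \<omega>lim unfolding filterlim_at_top by (rule spec)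
    have e3: "\<forall>\<^sub>F d in sequentially. 1 \<le> \<nu> d" using nu_infty unfolding filterlim_at_top \<nu>_def by (rule spec)
    have e4: "\<forall>\<^sub>F d in sequentially. 6 * v \<le> u d" using ulim unfolding filterlim_at_top by (rule spec)
    have e5: "\<forall>\<^sub>F d in sequentially. 4 \<le> (\<delta> d)\<^sup>2 * \<nu> d" using rholim unfolding filterlim_at_top by (rule spec)
    from e1 e2 e3 e4 e5 u_def \<omega>ev show ?thesis
    proof eventually_elim
      case (elim d)
      have d1: "d \<ge> 1" and \<omega>2: "\<omega> d \<ge> 2" and \<nu>1: "\<nu> d \<ge> 1" and u6: "6 * v \<le> u d"
        and \<rho>4: "4 \<le> (\<delta> d)\<^sup>2 * \<nu> d" and ud: "u d \<ge> u_dd" and uL: "u d * \<Lambda>' (u d) = real d"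
        using elim by auto
      have ineq: "\<And>e. e\<^sup>2 \<le> \<omega> d / \<nu> d \<Longrightarrow>
            \<bar>real d - ((1 - e) * u d) * \<Lambda>' ((1 - e) * u d) - e * \<nu> d\<bar> \<le> \<bar>e\<bar> * \<nu> d / \<omega> d"
        using elim(7) uL by (simp add: \<nu>_def mult.assoc)
      have \<nu>p: "\<nu> d > 0" using \<nu>1 by linarith
      have u0: "u d > 0" using u6 v by linarith
      have sq: "sqrt (\<omega> d / \<nu> d) > 0" using \<omega>2 \<nu>p by simp
      have \<delta>p: "\<delta> d > 0" using eps_pos sq by (simp add: \<delta>_def)
      have \<delta>h: "\<delta> d \<le> 1/2" "\<delta> d \<le> \<epsilon> d" "\<delta> d \<le> sqrt (\<omega> d / \<nu> d)" by (simp_all add: \<delta>_def)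
      have \<delta>sq: "(\<delta> d)\<^sup>2 \<le> \<omega> d / \<nu> d"
      proof -
        have "(\<delta> d)\<^sup>2 \<le> (sqrt (\<omega> d / \<nu> d))\<^sup>2" using \<delta>p \<delta>h by (intro power_mono) auto
        then show ?thesis using \<omega>2 \<nu>p by simp
      qed
      have small: "\<delta> d * \<nu> d / \<omega> d \<le> \<delta> d * \<nu> d / 2"
        using \<delta>p \<nu>p \<omega>2 by (intro divide_left_mono) auto
      have small': "\<bar>\<delta> d\<bar> * \<nu> d / \<omega> d \<le> \<delta> d * \<nu> d / 2" using small \<delta>p by simp
      have hl: "\<bar>real d - ((1 - \<delta> d) * u d) * \<Lambda>' ((1 - \<delta> d) * u d) - \<delta> d * \<nu> d\<bar> \<le> \<bar>\<delta> d\<bar> * \<nu> d / \<omega> d"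
        by (rule ineq[OF \<delta>sq])
      have kl: "real d - ((1 - \<delta> d) * u d) * \<Lambda>' ((1 - \<delta> d) * u d) \<ge> \<delta> d * \<nu> d / 2"
        using hl small' by arith
      have hr0: "\<bar>real d - ((1 - - \<delta> d) * u d) * \<Lambda>' ((1 - - \<delta> d) * u d) - (- \<delta> d) * \<nu> d\<bar> \<le> \<bar>- \<delta> d\<bar> * \<nu> d / \<omega> d"
        by (rule ineq) (use \<delta>sq in simp)
      have hr: "\<bar>real d - ((1 + \<delta> d) * u d) * \<Lambda>' ((1 + \<delta> d) * u d) + \<delta> d * \<nu> d\<bar> \<le> \<bar>\<delta> d\<bar> * \<nu> d / \<omega> d"
        using hr0 by simp
      have kr: "((1 + \<delta> d) * u d) * \<Lambda>' ((1 + \<delta> d) * u d) - real d \<ge> \<delta> d * \<nu> d / 2"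
        using hr small' by arith
      have mb: "1 - enn2real (JJ \<psi>0 d {(1 - \<delta> d) * u d .. (1 + \<delta> d) * u d}) / enn2real (JJ \<psi>0 d UNIV)
           \<le> m1 / (v * cc * 2^d) + 10 / ((\<delta> d)\<^sup>2 * \<nu> d)"
        by (rule main_bound[OF psi0m psi0nn psi0neg psi0eq deriv pos Lmono d1 v uL \<delta>p \<delta>h(1) u6 \<nu>p \<rho>4 kl kr
              JUfin[OF d1] m1 cc[unfolded CC_def]])
      interpret prob_space "M d" using prob d1 by auto
      have Xm[measurable]: "X d \<in> M d \<rightarrow>\<^sub>M lebesgue_R d" using dens d1 by (auto simp: distributed_def)
      have Pd: "measure (M d) {w\<in>space (M d). enorm d (X d w) \<in> {(1 - \<delta> d) * u d .. (1 + \<delta> d) * u d}}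
          = enn2real (JJ \<psi>0 d {(1 - \<delta> d) * u d .. (1 + \<delta> d) * u d}) / enn2real (JJ \<psi>0 d UNIV)"
        by (rule P[OF d1]) simp
      have sub: "{w\<in>space (M d). enorm d (X d w) \<in> {(1 - \<delta> d) * u d .. (1 + \<delta> d) * u d}} \<subseteq>
          {w \<in> space (M d). 1 - \<epsilon> d \<le> enorm d (X d w) / u d \<and> enorm d (X d w) / u d \<le> 1 + \<epsilon> d}"
      proof safe
        fix w assume w: "enorm d (X d w) \<in> {(1 - \<delta> d) * u d .. (1 + \<delta> d) * u d}"
        then have "1 - \<delta> d \<le> enorm d (X d w) / u d" "enorm d (X d w) / u d \<le> 1 + \<delta> d"
          using u0 by (auto simp: field_simps)
        then show "1 - \<epsilon> d \<le> enorm d (X d w) / u d" "enorm d (X d w) / u d \<le> 1 + \<epsilon> d"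
          using \<delta>h by auto
      qed
      have "1 - \<eta> d \<le> Pe d"
      proof -
        have "1 - \<eta> d \<le> measure (M d) {w\<in>space (M d). enorm d (X d w) \<in> {(1 - \<delta> d) * u d .. (1 + \<delta> d) * u d}}"
          using mb Pd by (simp add: \<eta>_def)
        also have "\<dots> \<le> Pe d" unfolding Pe_def
          by (rule finite_measure_mono[OF sub]) measurable
        finally show ?thesis .
      qed
      moreover have "Pe d \<le> 1" unfolding Pe_def by (rule prob_le_1)
      ultimately show ?case by simp
    qed
  qed
  have "(\<lambda>d. 1 - \<eta> d) \<longlonglongrightarrow> 1 - 0" by (intro tendsto_intros \<eta>lim)
  then have lim1: "(\<lambda>d. 1 - \<eta> d) \<longlonglongrightarrow> 1" by simp
  have ev1: "\<forall>\<^sub>F d in sequentially. 1 - \<eta> d \<le> Pe d" using ev by eventually_elim simp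
  have ev2: "\<forall>\<^sub>F d in sequentially. Pe d \<le> 1" using ev by eventually_elim simp
  have "Pe \<longlonglongrightarrow> 1"
    by (rule tendsto_sandwich[OF ev1 ev2 lim1 tendsto_const])
  then show ?thesis by (simp add: Pe_def[abs_def])
qed


end
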